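(* Let $\mathcal{D}$ be an algebra of bounded real functions with the Stone property and let $(L,\mathcal{D})$ be a sup-norm-closable Lagrangian. Then its associated energy form $(\mathcal{E}_L,\mathcal{D})$ is a sup-norm-closable bilinear form.
   Context: Stone property: $f\wedge1\in\mathcal{D}$. $T_1(x)=\max(x,0)\wedge1$. A Lagrangian is a symmetric bilinear map $(f,g)\mapsto L_{f,g}$ into the dual $\mathcal{D}'$ of $(\mathcal{D},\|\cdot\|_{\sup})$, with each $L_f:=L_{f,f}$ positive and $L_f-L_{T_1(f)}$ positive for all $f$. A bilinear form is sup-norm-closable if every $\mathcal{E}$-Cauchy $(f_n)$ with $\|f_n\|_{\sup}\to0$ has $\mathcal{E}(f_n)\to0$; a Lagrangian is sup-norm-closable if for each $h\ge0$ in $\mathcal{D}$ the bilinear form $(f,g)\mapsto L_{f,g}(h)$ is sup-norm-closable. The associated energy form is $\mathcal{E}_L(f)=\frac12\|L_f\|_{\mathcal{D}'}$ (with $\|L\|_{\mathcal{D}'}=\sup\{|L(h)|:\|h\|_{\sup}\le1\}$), which satisfies the parallelogram law, polarized to a bilinear form $\mathcal{E}_L(f,g)=\frac14(\mathcal{E}_L(f+g)-\mathcal{E}_L(f-g))$. *)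

theory Defs
  imports "HOL-Analysis.Analysis"
begin

definition supnorm :: "('a \<Rightarrow> real) \<Rightarrow> real" where
  "supnorm f = (SUP x. \<bar>f x\<bar>)"

definition bounded_fun :: "('a \<Rightarrow> real) \<Rightarrow> bool" where
  "bounded_fun f \<longleftrightarrow> (\<exists>C. \<forall>x. \<bar>f x\<bar> \<le> C)"

definition bounded_fun_algebra :: "('a \<Rightarrow> real) set \<Rightarrow> bool" where
  "bounded_fun_algebra D \<longleftrightarrow>
     (\<forall>f\<in>D. bounded_fun f) \<and> (\<lambda>x. 0) \<in> D \<and>
     (\<forall>f\<in>D. \<forall>g\<in>D. (\<lambda>x. f x + g x) \<in> D) \<and>
     (\<forall>f\<in>D. \<forall>c::real. (\<lambda>x. c * f x) \<in> D) \<and>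
     (\<forall>f\<in>D. \<forall>g\<in>D. (\<lambda>x. f x * g x) \<in> D)"

definition stone_property :: "('a \<Rightarrow> real) set \<Rightarrow> bool" where
  "stone_property D \<longleftrightarrow> (\<forall>f\<in>D. (\<lambda>x. min (f x) 1) \<in> D)"

definition T1 :: "('a \<Rightarrow> real) \<Rightarrow> ('a \<Rightarrow> real)" where
  "T1 f = (\<lambda>x. min (max (f x) 0) 1)"

definition in_dual :: "('a \<Rightarrow> real) set \<Rightarrow> (('a \<Rightarrow> real) \<Rightarrow> real) \<Rightarrow> bool" where
  "in_dual D l \<longleftrightarrow>
     (\<forall>f\<in>D. \<forall>g\<in>D. l (\<lambda>x. f x + g x) = l f + l g) \<and>
     (\<forall>f\<in>D. \<forall>c::real. l (\<lambda>x. c * f x) = c * l f) \<and>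
     (\<exists>C. \<forall>h\<in>D. \<bar>l h\<bar> \<le> C * supnorm h)"

definition dual_norm :: "('a \<Rightarrow> real) set \<Rightarrow> (('a \<Rightarrow> real) \<Rightarrow> real) \<Rightarrow> real" where
  "dual_norm D l = (SUP h\<in>{h\<in>D. supnorm h \<le> 1}. \<bar>l h\<bar>)"

definition positive_functional :: "('a \<Rightarrow> real) set \<Rightarrow> (('a \<Rightarrow> real) \<Rightarrow> real) \<Rightarrow> bool" where
  "positive_functional D l \<longleftrightarrow> (\<forall>h\<in>D. (\<forall>x. h x \<ge> 0) \<longrightarrow> l h \<ge> 0)"

text \<open>A Lagrangian: L f g is the functional L_{f,g}, evaluated at h as L f g h.\<close>
definition lagrangian ::
  "('a \<Rightarrow> real) set \<Rightarrow> (('a \<Rightarrow> real) \<Rightarrow> ('a \<Rightarrow> real) \<Rightarrow> ('a \<Rightarrow> real) \<Rightarrow> real) \<Rightarrow> bool" where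
  "lagrangian D L \<longleftrightarrow>
     (\<forall>f\<in>D. \<forall>g\<in>D. in_dual D (L f g)) \<and>
     (\<forall>f\<in>D. \<forall>g\<in>D. \<forall>h\<in>D. L f g h = L g f h) \<and>
     (\<forall>f\<in>D. \<forall>f'\<in>D. \<forall>g\<in>D. \<forall>h\<in>D. L (\<lambda>x. f x + f' x) g h = L f g h + L f' g h) \<and>
     (\<forall>f\<in>D. \<forall>g\<in>D. \<forall>h\<in>D. \<forall>c::real. L (\<lambda>x. c * f x) g h = c * L f g h) \<and>
     (\<forall>f\<in>D. positive_functional D (L f f)) \<and>
     (\<forall>f\<in>D. T1 f \<in> D \<and> positive_functional D (\<lambda>h. L f f h - L (T1 f) (T1 f) h))"

definition supnorm_closable ::
  "('a \<Rightarrow> real) set \<Rightarrow> (('a \<Rightarrow> real) \<Rightarrow> ('a \<Rightarrow> real) \<Rightarrow> real) \<Rightarrow> bool" where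
  "supnorm_closable D B \<longleftrightarrow>
     (\<forall>fs::nat \<Rightarrow> ('a \<Rightarrow> real).
        (\<forall>n. fs n \<in> D) \<longrightarrow>
        (\<forall>\<epsilon>>0. \<exists>N. \<forall>n\<ge>N. \<forall>m\<ge>N.
            B (\<lambda>x. fs n x - fs m x) (\<lambda>x. fs n x - fs m x) < \<epsilon>) \<longrightarrow>
        (\<lambda>n. supnorm (fs n)) \<longlonglongrightarrow> 0 \<longrightarrow>
        (\<lambda>n. B (fs n) (fs n)) \<longlonglongrightarrow> 0)"

definition supnorm_closable_lagrangian ::
  "('a \<Rightarrow> real) set \<Rightarrow> (('a \<Rightarrow> real) \<Rightarrow> ('a \<Rightarrow> real) \<Rightarrow> ('a \<Rightarrow> real) \<Rightarrow> real) \<Rightarrow> bool" where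
  "supnorm_closable_lagrangian D L \<longleftrightarrow>
     (\<forall>h\<in>D. (\<forall>x. h x \<ge> 0) \<longrightarrow> supnorm_closable D (\<lambda>f g. L f g h))"

definition energy :: "('a \<Rightarrow> real) set \<Rightarrow> (('a \<Rightarrow> real) \<Rightarrow> ('a \<Rightarrow> real) \<Rightarrow> ('a \<Rightarrow> real) \<Rightarrow> real)
     \<Rightarrow> ('a \<Rightarrow> real) \<Rightarrow> real" where
  "energy D L f = dual_norm D (L f f) / 2"

definition energy_form :: "('a \<Rightarrow> real) set \<Rightarrow> (('a \<Rightarrow> real) \<Rightarrow> ('a \<Rightarrow> real) \<Rightarrow> ('a \<Rightarrow> real) \<Rightarrow> real)
     \<Rightarrow> ('a \<Rightarrow> real) \<Rightarrow> ('a \<Rightarrow> real) \<Rightarrow> real" where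
  "energy_form D L f g =
     (energy D L (\<lambda>x. f x + g x) - energy D L (\<lambda>x. f x - g x)) / 4"

end

theory Submission
  imports Defs
begin

lemma bfa_facts:
  assumes "bounded_fun_algebra D"
  shows "\<And>f. f\<in>D \<Longrightarrow> bounded_fun f" "(\<lambda>x. 0) \<in> D"
    "\<And>f g. f\<in>D \<Longrightarrow> g\<in>D \<Longrightarrow> (\<lambda>x. f x + g x) \<in> D"
    "\<And>f c. f\<in>D \<Longrightarrow> (\<lambda>x. c * f x) \<in> D"
    "\<And>f g. f\<in>D \<Longrightarrow> g\<in>D \<Longrightarrow> (\<lambda>x. f x - g x) \<in> D"
proof -
  show "\<And>f g. f\<in>D \<Longrightarrow> g\<in>D \<Longrightarrow> (\<lambda>x. f x - g x) \<in> D"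
  proof -
    fix f g assume "f\<in>D" "g\<in>D"
    have m: "(\<lambda>x. (-1) * g x) \<in> D" using assms \<open>g\<in>D\<close> unfolding bounded_fun_algebra_def by blast
    have ad: "\<forall>f\<in>D. \<forall>g\<in>D. (\<lambda>x. f x + g x) \<in> D" using assms unfolding bounded_fun_algebra_def by blast
    have "(\<lambda>x. f x + (\<lambda>x. (-1) * g x) x) \<in> D" using ad[rule_format, OF \<open>f\<in>D\<close> m] by simp
    then show "(\<lambda>x. f x - g x) \<in> D" by simp
  qed
qed (use assms in \<open>auto simp: bounded_fun_algebra_def\<close>)

lemma supnorm_facts:
  assumes "bounded_fun h"
  shows "\<bar>h x\<bar> \<le> supnorm h" "supnorm h \<ge> 0"
proof -
  obtain C where C: "\<forall>x. \<bar>h x\<bar> \<le> C" using assms unfolding bounded_fun_def by blast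
  have bdd: "bdd_above (range (\<lambda>x. \<bar>h x\<bar>))" using C by (auto intro: bdd_aboveI)
  show "\<bar>h x\<bar> \<le> supnorm h" unfolding supnorm_def by (rule cSUP_upper[OF _ bdd]) auto
  then show "supnorm h \<ge> 0" by (meson abs_ge_zero order_trans)
qed

lemma supnorm_zero: "supnorm (\<lambda>x. 0) = 0"
  unfolding supnorm_def by simp

lemma in_dual_sub:
  assumes "in_dual D l" "bounded_fun_algebra D" "a\<in>D" "b\<in>D"
  shows "l (\<lambda>x. a x - b x) = l a - l b"
proof -
  have m: "(\<lambda>x. (-1) * b x) \<in> D" using bfa_facts(4)[OF assms(2) assms(4)] .
  have sc: "\<forall>f\<in>D. \<forall>c::real. l (\<lambda>x. c * f x) = c * l f" using assms(1) unfolding in_dual_def by blast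
  have ad: "\<forall>f\<in>D. \<forall>g\<in>D. l (\<lambda>x. f x + g x) = l f + l g" using assms(1) unfolding in_dual_def by blast
  have "l (\<lambda>x. a x + (\<lambda>x. (-1) * b x) x) = l a + l (\<lambda>x. (-1) * b x)"
    using ad[rule_format, OF assms(3) m] by simp
  also have "l (\<lambda>x. (-1) * b x) = - l b" using sc[rule_format, OF assms(4), of "-1"] by simp
  finally show ?thesis by simp
qed

lemma dn_bdd:
  assumes "in_dual D l" "bounded_fun_algebra D"
  shows "bdd_above ((\<lambda>h. \<bar>l h\<bar>) ` {h\<in>D. supnorm h \<le> 1})"
proof -
  obtain C where C: "\<forall>h\<in>D. \<bar>l h\<bar> \<le> C * supnorm h" using assms(1) unfolding in_dual_def by blast
  have "\<bar>l h\<bar> \<le> max C 0" if "h\<in>D" "supnorm h \<le> 1" for h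
  proof -
    have s: "supnorm h \<ge> 0" using supnorm_facts(2) bfa_facts(1)[OF assms(2) that(1)] .
    have "C * supnorm h \<le> max C 0"
    proof (cases "C \<ge> 0")
      case True then show ?thesis using that(2) s by (simp add: mult_left_le)
    next
      case False then show ?thesis using s by (simp add: mult_nonpos_nonneg)
    qed
    then show ?thesis using C that by force
  qed
  then show ?thesis by (intro bdd_aboveI[where M="max C 0"]) auto
qed

lemma dn_upper:
  assumes "in_dual D l" "bounded_fun_algebra D" "h\<in>D" "supnorm h \<le> 1"
  shows "\<bar>l h\<bar> \<le> dual_norm D l"
  unfolding dual_norm_def by (rule cSUP_upper[OF _ dn_bdd[OF assms(1,2)]]) (simp add: assms(3,4))

lemma dn_least:
  assumes "bounded_fun_algebra D" "\<And>h. h\<in>D \<Longrightarrow> supnorm h \<le> 1 \<Longrightarrow> \<bar>l h\<bar> \<le> c"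
  shows "dual_norm D l \<le> c"
  unfolding dual_norm_def
proof (rule cSUP_least)
  have z: "supnorm (\<lambda>x::'a. 0::real) \<le> 1" using supnorm_zero[where 'a='a] by linarith
  have "(\<lambda>x. 0) \<in> {h \<in> D. supnorm h \<le> 1}" using bfa_facts(2)[OF assms(1)] z by simp
  then show "{h \<in> D. supnorm h \<le> 1} \<noteq> {}" by blast
next
  fix h assume "h \<in> {h \<in> D. supnorm h \<le> 1}"
  then have "h \<in> D" "supnorm h \<le> 1" by simp_all
  then show "\<bar>l h\<bar> \<le> c" by (rule assms(2))
qed

lemma dn_nonneg:
  assumes "in_dual D l" "bounded_fun_algebra D"
  shows "dual_norm D l \<ge> 0"
proof -
  have z: "supnorm (\<lambda>x::'a. 0::real) \<le> 1" using supnorm_zero[where 'a='a] by linarith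
  have "\<bar>l (\<lambda>x. 0)\<bar> \<le> dual_norm D l" by (rule dn_upper[OF assms bfa_facts(2)[OF assms(2)] z])
  then show ?thesis using abs_ge_zero[of "l (\<lambda>x. 0)"] by linarith
qed

lemma dn_scale:
  assumes "in_dual D l" "in_dual D l'" "bounded_fun_algebra D" "c \<ge> 0"
    "\<And>h. h\<in>D \<Longrightarrow> l' h = c * l h"
  shows "dual_norm D l' = c * dual_norm D l"
proof (rule antisym)
  show "dual_norm D l' \<le> c * dual_norm D l"
    by (rule dn_least[OF assms(3)]) (use assms dn_upper[OF assms(1,3)] in \<open>auto simp: abs_mult intro: mult_left_mono\<close>)
next
  show "c * dual_norm D l \<le> dual_norm D l'"
  proof (cases "c = 0")
    case True then show ?thesis using dn_nonneg[OF assms(2,3)] by simp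
  next
    case False
    then have cp: "c > 0" using assms(4) by simp
    have "dual_norm D l \<le> dual_norm D l' / c"
    proof (rule dn_least[OF assms(3)])
      fix h assume h: "h\<in>D" "supnorm h \<le> 1"
      have "\<bar>l' h\<bar> \<le> dual_norm D l'" using dn_upper[OF assms(2,3) h] .
      then have "c * \<bar>l h\<bar> \<le> dual_norm D l'" using assms(5)[OF h(1)] cp by (simp add: abs_mult)
      then show "\<bar>l h\<bar> \<le> dual_norm D l' / c" using cp by (simp add: field_simps)
    qed
    then show ?thesis using cp by (simp add: field_simps)
  qed
qed

context
  fixes D :: "('a \<Rightarrow> real) set" and L
  assumes A: "bounded_fun_algebra D" and LG: "lagrangian D L"
begin

lemma Ldual: "f\<in>D \<Longrightarrow> g\<in>D \<Longrightarrow> in_dual D (L f g)"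
  using LG unfolding lagrangian_def by blast

lemma Lsym: "f\<in>D \<Longrightarrow> g\<in>D \<Longrightarrow> h\<in>D \<Longrightarrow> L f g h = L g f h"
  using LG unfolding lagrangian_def by blast

lemma Lscale1: "f\<in>D \<Longrightarrow> g\<in>D \<Longrightarrow> h\<in>D \<Longrightarrow> L (\<lambda>x. c * f x) g h = c * L f g h"
  using LG unfolding lagrangian_def by blast

lemma Lscale2: "f\<in>D \<Longrightarrow> g\<in>D \<Longrightarrow> h\<in>D \<Longrightarrow> L f (\<lambda>x. c * g x) h = c * L f g h"
proof -
  assume a: "f\<in>D" "g\<in>D" "h\<in>D"
  have m: "(\<lambda>x. c * g x) \<in> D" using bfa_facts(4)[OF A a(2)] .
  have "L f (\<lambda>x. c * g x) h = L (\<lambda>x. c * g x) f h" using Lsym[OF a(1) m a(3)] .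
  also have "\<dots> = c * L g f h" using Lscale1[OF a(2) a(1) a(3)] .
  also have "L g f h = L f g h" using Lsym[OF a(2) a(1) a(3)] .
  finally show ?thesis .
qed

lemma Lsub1: "f\<in>D \<Longrightarrow> f'\<in>D \<Longrightarrow> g\<in>D \<Longrightarrow> h\<in>D \<Longrightarrow> L (\<lambda>x. f x - f' x) g h = L f g h - L f' g h"
proof -
  assume a: "f\<in>D" "f'\<in>D" "g\<in>D" "h\<in>D"
  have m: "(\<lambda>x. (-1) * f' x) \<in> D" using bfa_facts(4)[OF A a(2)] .
  have ad: "\<forall>f\<in>D. \<forall>f'\<in>D. \<forall>g\<in>D. \<forall>h\<in>D. L (\<lambda>x. f x + f' x) g h = L f g h + L f' g h"
    using LG unfolding lagrangian_def by blast
  have "L (\<lambda>x. f x + (\<lambda>x. (-1) * f' x) x) g h = L f g h + L (\<lambda>x. (-1) * f' x) g h"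
    using ad[rule_format, OF a(1) m a(3) a(4)] by simp
  also have "L (\<lambda>x. (-1) * f' x) g h = - L f' g h" using Lscale1[OF a(2,3,4), of "-1"] by simp
  finally show ?thesis by simp
qed

lemma Lsub2: "f\<in>D \<Longrightarrow> g\<in>D \<Longrightarrow> g'\<in>D \<Longrightarrow> h\<in>D \<Longrightarrow> L f (\<lambda>x. g x - g' x) h = L f g h - L f g' h"
proof -
  assume a: "f\<in>D" "g\<in>D" "g'\<in>D" "h\<in>D"
  have m: "(\<lambda>x. g x - g' x) \<in> D" using bfa_facts(5)[OF A a(2) a(3)] .
  have "L f (\<lambda>x. g x - g' x) h = L (\<lambda>x. g x - g' x) f h" using Lsym[OF a(1) m a(4)] .
  also have "\<dots> = L g f h - L g' f h" using Lsub1[OF a(2) a(3) a(1) a(4)] .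
  also have "L g f h = L f g h" using Lsym[OF a(2) a(1) a(4)] .
  also have "L g' f h = L f g' h" using Lsym[OF a(3) a(1) a(4)] .
  finally show ?thesis .
qed

lemma Lpos: "f\<in>D \<Longrightarrow> h\<in>D \<Longrightarrow> (\<forall>x. h x \<ge> 0) \<Longrightarrow> L f f h \<ge> 0"
  using LG unfolding lagrangian_def positive_functional_def by blast

lemma quad_ineq:
  assumes "a\<in>D" "b\<in>D" "h\<in>D" "\<forall>x. h x \<ge> 0"
  shows "L a a h \<le> 2 * L (\<lambda>x. a x - b x) (\<lambda>x. a x - b x) h + 2 * L b b h"
proof -
  have b2: "(\<lambda>x. 2 * b x) \<in> D" using bfa_facts(4)[OF A assms(2)] .
  have d: "(\<lambda>x. a x - b x) \<in> D" using bfa_facts(5)[OF A assms(1,2)] .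
  have "0 \<le> L (\<lambda>x. a x - (\<lambda>x. 2 * b x) x) (\<lambda>x. a x - (\<lambda>x. 2 * b x) x) h"
    using Lpos[OF bfa_facts(5)[OF A assms(1) b2] assms(3,4)] .
  also have "\<dots> = L a a h - 4 * L a b h + 4 * L b b h"
  proof -
    define c where "c = (\<lambda>x. a x - (\<lambda>x. 2 * b x) x)"
    have cD: "c \<in> D" unfolding c_def using bfa_facts(5)[OF A assms(1) b2] .
    have e1: "L c c h = L a c h - L (\<lambda>x. 2 * b x) c h"
      unfolding c_def[symmetric] using Lsub1[OF assms(1) b2 cD assms(3)] unfolding c_def .
    have e2: "L a c h = L a a h - L a (\<lambda>x. 2 * b x) h"
      unfolding c_def using Lsub2[OF assms(1) assms(1) b2 assms(3)] .
    have e3: "L a (\<lambda>x. 2 * b x) h = 2 * L a b h" using Lscale2[OF assms(1) assms(2) assms(3)] .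
    have e4: "L (\<lambda>x. 2 * b x) c h = 2 * L b c h" using Lscale1[OF assms(2) cD assms(3)] .
    have e5: "L b c h = L b a h - L b (\<lambda>x. 2 * b x) h"
      unfolding c_def using Lsub2[OF assms(2) assms(1) b2 assms(3)] .
    have e6: "L b (\<lambda>x. 2 * b x) h = 2 * L b b h" using Lscale2[OF assms(2) assms(2) assms(3)] .
    have e7: "L b a h = L a b h" using Lsym[OF assms(2) assms(1) assms(3)] .
    have "L c c h = L a a h - 4 * L a b h + 4 * L b b h"
      unfolding e1 e2 e3 e4 e5 e6 e7 by simp
    then show ?thesis unfolding c_def .
  qed
  finally have 1: "0 \<le> L a a h - 4 * L a b h + 4 * L b b h" .
  have "L (\<lambda>x. a x - b x) (\<lambda>x. a x - b x) h = L a a h - 2 * L a b h + L b b h"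
  proof -
    have e1: "L (\<lambda>x. a x - b x) (\<lambda>x. a x - b x) h = L a (\<lambda>x. a x - b x) h - L b (\<lambda>x. a x - b x) h"
      using Lsub1[OF assms(1) assms(2) d assms(3)] .
    have e2: "L a (\<lambda>x. a x - b x) h = L a a h - L a b h" using Lsub2[OF assms(1) assms(1) assms(2) assms(3)] .
    have e3: "L b (\<lambda>x. a x - b x) h = L b a h - L b b h" using Lsub2[OF assms(2) assms(1) assms(2) assms(3)] .
    have e7: "L b a h = L a b h" using Lsym[OF assms(2) assms(1) assms(3)] .
    show ?thesis unfolding e1 e2 e3 e7 by simp
  qed
  then show ?thesis using 1 by linarith
qed

lemma energy_form_diag:
  assumes "g\<in>D"
  shows "energy_form D L g g = dual_norm D (L g g) / 2"
proof -
  have gg: "(\<lambda>x. g x + g x) \<in> D" using bfa_facts(3)[OF A assms assms] .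
  have g0: "(\<lambda>x. g x - g x) \<in> D" using bfa_facts(5)[OF A assms assms] .
  have e1: "dual_norm D (L (\<lambda>x. g x + g x) (\<lambda>x. g x + g x)) = 4 * dual_norm D (L g g)"
  proof (rule dn_scale[OF Ldual[OF assms assms] Ldual[OF gg gg] A])
    fix h assume h: "h\<in>D"
    have eq: "(\<lambda>x. g x + g x) = (\<lambda>x. 2 * g x)" by (auto simp: fun_eq_iff)
    show "L (\<lambda>x. g x + g x) (\<lambda>x. g x + g x) h = 4 * L g g h"
      unfolding eq using h assms bfa_facts(4)[OF A assms, of 2] by (simp add: Lscale1 Lscale2)
  qed simp
  have e2: "dual_norm D (L (\<lambda>x. g x - g x) (\<lambda>x. g x - g x)) = 0 * dual_norm D (L g g)"
  proof (rule dn_scale[OF Ldual[OF assms assms] Ldual[OF g0 g0] A])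
    fix h assume h: "h\<in>D"
    have eq: "(\<lambda>x. g x - g x) = (\<lambda>x. 0 * g x)" by (auto simp: fun_eq_iff)
    show "L (\<lambda>x. g x - g x) (\<lambda>x. g x - g x) h = 0 * L g g h"
      unfolding eq using h assms bfa_facts(4)[OF A assms, of 0] Lscale1[of g "\<lambda>x. 0 * g x" h 0] by simp
  qed simp
  show ?thesis unfolding energy_form_def energy_def e1 e2 by simp
qed

end

lemma supnorm_T1: "supnorm (T1 f) \<le> 1"
  unfolding supnorm_def T1_def by (rule cSUP_least) auto

lemma T1_decomp: "\<bar>h x\<bar> \<le> (1::real) \<Longrightarrow> h x = T1 h x - T1 (\<lambda>x. (-1) * h x) x"
  unfolding T1_def by (cases "h x \<ge> 0") (simp_all add: max_def min_def)

lemma T1_nonneg: "T1 f x \<ge> 0"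
  unfolding T1_def by simp

theorem propositionP:
  fixes D :: "('a \<Rightarrow> real) set"
    and L :: "('a \<Rightarrow> real) \<Rightarrow> ('a \<Rightarrow> real) \<Rightarrow> ('a \<Rightarrow> real) \<Rightarrow> real"
  assumes "bounded_fun_algebra D"
    and "stone_property D"
    and "lagrangian D L"
    and "supnorm_closable_lagrangian D L"
  shows "supnorm_closable D (energy_form D L)"
  unfolding supnorm_closable_def
proof (intro allI impI)
  note A = assms(1) and LG = assms(3)
  fix fs :: "nat \<Rightarrow> 'a \<Rightarrow> real"
  assume fD: "\<forall>n. fs n \<in> D"
    and cau: "\<forall>\<epsilon>>0. \<exists>N. \<forall>n\<ge>N. \<forall>m\<ge>N.
            energy_form D L (\<lambda>x. fs n x - fs m x) (\<lambda>x. fs n x - fs m x) < \<epsilon>"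
    and sn: "(\<lambda>n. supnorm (fs n)) \<longlonglongrightarrow> 0"
  define d where "d n m = (\<lambda>x. fs n x - fs m x)" for n m
  have dD: "d n m \<in> D" for n m unfolding d_def using bfa_facts(5)[OF A, of "fs n" "fs m"] fD by simp
  have cau': "\<exists>N. \<forall>n\<ge>N. \<forall>m\<ge>N. \<forall>h\<in>D. supnorm h \<le> 1 \<longrightarrow> \<bar>L (d n m) (d n m) h\<bar> < e"
    if e: "e > 0" for e
  proof -
    have e2: "e/2 > 0" using e by simp
    obtain N where N0: "\<forall>n\<ge>N. \<forall>m\<ge>N.
            energy_form D L (\<lambda>x. fs n x - fs m x) (\<lambda>x. fs n x - fs m x) < e/2"
      using cau[rule_format, OF e2] by (elim exE)
    have N: "\<forall>n\<ge>N. \<forall>m\<ge>N. energy_form D L (d n m) (d n m) < e/2"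
      unfolding d_def using N0 by assumption
    show ?thesis
    proof (intro exI[of _ N] allI impI ballI)
      fix n m h assume nm: "n \<ge> N" "m \<ge> N" and h: "h \<in> D" "supnorm h \<le> 1"
      have "energy_form D L (d n m) (d n m) = dual_norm D (L (d n m) (d n m)) / 2"
        using energy_form_diag[OF A LG dD] .
      moreover have "energy_form D L (d n m) (d n m) < e/2" using N nm by blast
      ultimately have "dual_norm D (L (d n m) (d n m)) < e" by linarith
      moreover have "\<bar>L (d n m) (d n m) h\<bar> \<le> dual_norm D (L (d n m) (d n m))"
        using dn_upper[OF Ldual[OF A LG dD dD] A h] .
      ultimately show "\<bar>L (d n m) (d n m) h\<bar> < e" by linarith
    qed
  qed
  have lim0: "(\<lambda>m. L (fs m) (fs m) h) \<longlonglongrightarrow> 0"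
    if h: "h \<in> D" "\<forall>x. h x \<ge> 0" "supnorm h \<le> 1" for h
  proof -
    have "\<forall>h\<in>D. (\<forall>x. h x \<ge> 0) \<longrightarrow> supnorm_closable D (\<lambda>f g. L f g h)"
      using assms(4) unfolding supnorm_closable_lagrangian_def by assumption
    then have SC: "supnorm_closable D (\<lambda>f g. L f g h)" using h(1,2) by (elim ballE impE) auto
    have CA: "\<forall>\<epsilon>>0. \<exists>N. \<forall>n\<ge>N. \<forall>m\<ge>N.
            L (\<lambda>x. fs n x - fs m x) (\<lambda>x. fs n x - fs m x) h < \<epsilon>"
    proof (intro allI impI)
      fix e :: real assume "e > 0"
      then obtain N where N: "\<forall>n\<ge>N. \<forall>m\<ge>N. \<forall>h\<in>D. supnorm h \<le> 1 \<longrightarrow> \<bar>L (d n m) (d n m) h\<bar> < e"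
        using cau'[OF \<open>e > 0\<close>] by (elim exE)
      show "\<exists>N. \<forall>n\<ge>N. \<forall>m\<ge>N. L (\<lambda>x. fs n x - fs m x) (\<lambda>x. fs n x - fs m x) h < e"
      proof (intro exI[of _ N] allI impI)
        fix n m assume nm: "n \<ge> N" "m \<ge> N"
        have "\<bar>L (d n m) (d n m) h\<bar> < e" using N[rule_format, OF nm h(1) h(3)] .
        then show "L (\<lambda>x. fs n x - fs m x) (\<lambda>x. fs n x - fs m x) h < e"
          unfolding d_def by linarith
      qed
    qed
    show ?thesis using SC[unfolded supnorm_closable_def, rule_format, OF fD[rule_format] CA[rule_format] sn] .
  qed
  show "(\<lambda>n. energy_form D L (fs n) (fs n)) \<longlonglongrightarrow> 0"
  proof (rule LIMSEQ_I)
    fix r :: real assume r: "r > 0"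
    obtain N where N: "\<forall>n\<ge>N. \<forall>m\<ge>N. \<forall>h\<in>D. supnorm h \<le> 1 \<longrightarrow> \<bar>L (d n m) (d n m) h\<bar> < r/4"
      using cau' r by (metis zero_less_divide_iff zero_less_numeral)
    have pos: "L (fs n) (fs n) h \<le> r/2"
      if n: "n \<ge> N" and h: "h \<in> D" "\<forall>x. h x \<ge> 0" "supnorm h \<le> 1" for n h
    proof (rule LIMSEQ_le_const)
      have "(\<lambda>m. r/2 + 2 * L (fs m) (fs m) h) \<longlonglongrightarrow> r/2 + 2 * 0"
        by (intro tendsto_intros lim0[OF h])
      then show "(\<lambda>m. r/2 + 2 * L (fs m) (fs m) h) \<longlonglongrightarrow> r/2" by simp
      show "\<exists>M. \<forall>m\<ge>M. L (fs n) (fs n) h \<le> r/2 + 2 * L (fs m) (fs m) h"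
      proof (intro exI[of _ N] allI impI)
        fix m assume m: "m \<ge> N"
        have "L (fs n) (fs n) h \<le> 2 * L (d n m) (d n m) h + 2 * L (fs m) (fs m) h"
          using quad_ineq[OF A LG fD[rule_format] fD[rule_format] h(1,2)] unfolding d_def .
        moreover have "\<bar>L (d n m) (d n m) h\<bar> < r/4" using N n m h by blast
        ultimately show "L (fs n) (fs n) h \<le> r/2 + 2 * L (fs m) (fs m) h" by linarith
      qed
    qed
    have all: "\<bar>L (fs n) (fs n) h\<bar> \<le> r/2"
      if n: "n \<ge> N" and h: "h \<in> D" "supnorm h \<le> 1" for n h
    proof -
      have mh: "(\<lambda>x. (-1) * h x) \<in> D" using bfa_facts(4)[OF A h(1)] .
      have T1D: "\<forall>f\<in>D. T1 f \<in> D" using LG unfolding lagrangian_def by blast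
      have h1: "T1 h \<in> D" using T1D h(1) by blast
      have h2: "T1 (\<lambda>x. (-1) * h x) \<in> D" using T1D mh by blast
      have nn1: "\<forall>x. 0 \<le> T1 h x" by (simp add: T1_nonneg)
      have nn2: "\<forall>x. 0 \<le> T1 (\<lambda>x. (-1) * h x) x" by (simp add: T1_nonneg)
      have hb: "\<bar>h x\<bar> \<le> 1" for x using supnorm_facts(1)[OF bfa_facts(1)[OF A h(1)], of x] h(2) by linarith
      have eq: "h = (\<lambda>x. T1 h x - T1 (\<lambda>x. (-1) * h x) x)"
      proof
        fix x show "h x = T1 h x - T1 (\<lambda>x. (-1) * h x) x"
          using T1_decomp[of h x, OF hb[of x]] .
      qed
      define g where "g = (\<lambda>x. T1 h x - T1 (\<lambda>x. (-1) * h x) x)"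
      have hg: "h = g" using eq unfolding g_def .
      have "L (fs n) (fs n) g = L (fs n) (fs n) (T1 h) - L (fs n) (fs n) (T1 (\<lambda>x. (-1) * h x))"
        unfolding g_def by (rule in_dual_sub[OF Ldual[OF A LG fD[rule_format] fD[rule_format]] A h1 h2])
      then have "L (fs n) (fs n) h = L (fs n) (fs n) (T1 h) - L (fs n) (fs n) (T1 (\<lambda>x. (-1) * h x))"
        by (simp only: hg)
      moreover have "0 \<le> L (fs n) (fs n) (T1 h)" "L (fs n) (fs n) (T1 h) \<le> r/2"
        using Lpos[OF A LG fD[rule_format] h1 nn1] pos[OF n h1 nn1 supnorm_T1] by auto
      moreover have "0 \<le> L (fs n) (fs n) (T1 (\<lambda>x. (-1) * h x))"
          "L (fs n) (fs n) (T1 (\<lambda>x. (-1) * h x)) \<le> r/2"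
        using Lpos[OF A LG fD[rule_format] h2 nn2] pos[OF n h2 nn2 supnorm_T1] by auto
      ultimately show ?thesis by linarith
    qed
    show "\<exists>N. \<forall>n\<ge>N. norm (energy_form D L (fs n) (fs n) - 0) < r"
    proof (intro exI[of _ N] allI impI)
      fix n assume n: "n \<ge> N"
      have ef: "energy_form D L (fs n) (fs n) = dual_norm D (L (fs n) (fs n)) / 2"
        by (rule energy_form_diag[OF A LG, of "fs n"]) (use fD in blast)
      have "dual_norm D (L (fs n) (fs n)) \<le> r/2"
        by (rule dn_least[OF A], rule all[OF n])
      moreover have "dual_norm D (L (fs n) (fs n)) \<ge> 0"
        using dn_nonneg[OF Ldual[OF A LG fD[rule_format] fD[rule_format]] A] .
      ultimately have "\<bar>energy_form D L (fs n) (fs n)\<bar> < r" unfolding ef using r by linarith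
      then show "norm (energy_form D L (fs n) (fs n) - 0) < r" by simp
    qed
  qed
qed

end
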